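(* Let $\mathbb{K}$ be a field of characteristic zero and let $f=\frac{b}{c\,d^\lambda}\in\mathbb{K}(x,y,z)$, where $\lambda$ is a positive integer, $b,d\in\mathbb{K}[x,y,z]$, $c\in\mathbb{K}[x,y]$, $d$ is irreducible, $b,c,d$ are primitive as polynomials in $y,z$, and $\deg_z(b)<\deg_z(d)$. Suppose there is a positive integer $m$ with $\sigma_x^m(d)=\sigma_y^n\sigma_z^k(d)$ for some $n,k\in\mathbb{Z}$; let $m$ be the smallest such positive integer and fix integers $n,k$ with $\sigma_x^m(d)=\sigma_y^n\sigma_z^k(d)$. If one of the following holds: (i) there exist $n_1,n_2,k_1,k_2\in\mathbb{Z}$ with $n_1,n_2>0$ such that $\sigma_y^{n_1}(d)=\sigma_z^{k_1}(d)$ and $\sigma_x^{n_2}(c)=\sigma_y^{k_2}(c)$; (ii) there exists a positive integer $t$ such that $\sigma_x^{tm}(c)=\sigma_y^{tn}(c)$; then $f$ has a telescoper.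
   Context: $\sigma_x,\sigma_y,\sigma_z$ are the shift automorphisms of $\mathbb{K}(x,y,z)$: $\sigma_x(f)=f(x+1,y,z)$, $\sigma_y(f)=f(x,y+1,z)$, $\sigma_z(f)=f(x,y,z+1)$. A rational function $g\in\mathbb{K}(x,y,z)$ is $(\sigma_y,\sigma_z)$-summable if $g=\sigma_y(u)-u+\sigma_z(v)-v$ for some $u,v\in\mathbb{K}(x,y,z)$. A telescoper for $f$ is a nonzero operator $L=\sum_i \ell_i S_x^i$ with $\ell_i\in\mathbb{K}(x)$ such that $L(f)=\sum_i\ell_i f(x+i,y,z)$ is $(\sigma_y,\sigma_z)$-summable. *)

theory Defs
  imports "HOL-Computational_Algebra.Polynomial" "HOL-Computational_Algebra.Fraction_Field"
begin

text \<open>Trivariate polynomials K[x,y,z] are represented as 'a poly poly poly: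
  a polynomial in z whose coefficients are polynomials in y whose coefficients
  are polynomials in x.\<close>

type_synonym 'a tpoly = "'a poly poly poly"
type_synonym 'a trat = "'a tpoly fract"

definition shx :: "int \<Rightarrow> 'a::field_char_0 tpoly \<Rightarrow> 'a tpoly" where
  "shx a p = map_poly (map_poly (\<lambda>r. pcompose r [:of_int a, 1:])) p"

definition shy :: "int \<Rightarrow> 'a::field_char_0 tpoly \<Rightarrow> 'a tpoly" where
  "shy a p = map_poly (\<lambda>q. pcompose q [:of_int a, 1:]) p"

definition shz :: "int \<Rightarrow> 'a::field_char_0 tpoly \<Rightarrow> 'a tpoly" where
  "shz a p = pcompose p [:of_int a, 1:]"

definition embx :: "'a::field_char_0 poly \<Rightarrow> 'a tpoly" where
  "embx p = [:[:p:]:]"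

definition embxy :: "'a::field_char_0 poly poly \<Rightarrow> 'a tpoly" where
  "embxy p = [:p:]"

definition fshift :: "('a::field_char_0 tpoly \<Rightarrow> 'a tpoly) \<Rightarrow> 'a trat \<Rightarrow> 'a trat" where
  "fshift s q = (THE r. \<forall>a b. b \<noteq> 0 \<longrightarrow> q = Fract a b \<longrightarrow> r = Fract (s a) (s b))"

definition sigma_x :: "'a::field_char_0 trat \<Rightarrow> 'a trat" where
  "sigma_x = fshift (shx 1)"
definition sigma_y :: "'a::field_char_0 trat \<Rightarrow> 'a trat" where
  "sigma_y = fshift (shy 1)"
definition sigma_z :: "'a::field_char_0 trat \<Rightarrow> 'a trat" where
  "sigma_z = fshift (shz 1)"

definition Kx :: "'a::field_char_0 trat set" where
  "Kx = {Fract (embx p) (embx q) | p q. q \<noteq> 0}"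

definition yz_summable :: "'a::field_char_0 trat \<Rightarrow> bool" where
  "yz_summable g \<longleftrightarrow> (\<exists>u v. g = sigma_y u - u + sigma_z v - v)"

definition has_telescoper :: "'a::field_char_0 trat \<Rightarrow> bool" where
  "has_telescoper f \<longleftrightarrow> (\<exists>(N::nat) (l::nat \<Rightarrow> 'a trat).
      (\<forall>i\<le>N. l i \<in> Kx) \<and> (\<exists>i\<le>N. l i \<noteq> 0) \<and>
      yz_summable (\<Sum>i\<le>N. l i * (sigma_x ^^ i) f))"

definition prim_yz :: "'a::field_char_0 tpoly \<Rightarrow> bool" where
  "prim_yz p \<longleftrightarrow> (\<forall>r::'a poly. (\<forall>i j. r dvd coeff (coeff p i) j) \<longrightarrow> is_unit r)"

end

theory Submission
  imports Defs
begin


definition hom :: "('a::comm_ring_1 \<Rightarrow> 'b::comm_ring_1) \<Rightarrow> bool" where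
  "hom F \<longleftrightarrow> (\<forall>a b. F (a + b) = F a + F b) \<and> (\<forall>a b. F (a * b) = F a * F b) \<and> F 1 = 1"

lemma hom_add: "hom F \<Longrightarrow> F (a + b) = F a + F b" by (simp add: hom_def)
lemma hom_mult: "hom F \<Longrightarrow> F (a * b) = F a * F b" by (simp add: hom_def)
lemma hom_1: "hom F \<Longrightarrow> F 1 = 1" by (simp add: hom_def)
lemma hom_0: "hom F \<Longrightarrow> F 0 = 0"
  using hom_add[of F 0 0] by simp
lemma hom_uminus: "hom F \<Longrightarrow> F (- a) = - F a"
  using hom_add[of F a "-a"] hom_0[of F] add.inverse_unique[of "F a" "F (-a)"] by simp
lemma hom_diff: "hom F \<Longrightarrow> F (a - b) = F a - F b"
  using hom_add[of F a "-b"] hom_uminus[of F b] by simp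
lemma hom_sum: "hom F \<Longrightarrow> F (sum g A) = sum (\<lambda>x. F (g x)) A"
  by (induct A rule: infinite_finite_induct) (auto simp: hom_0 hom_add)
lemma hom_power: "hom F \<Longrightarrow> F (a ^ n) = F a ^ n"
  by (induct n) (auto simp: hom_1 hom_mult)
lemma hom_of_nat: "hom F \<Longrightarrow> F (of_nat n) = of_nat n"
  by (induct n) (auto simp: hom_0 hom_1 hom_add)
lemma hom_of_int: "hom F \<Longrightarrow> F (of_int n) = of_int n"
proof -
  assume h: "hom F"
  have "n = int (nat n) \<or> n = - int (nat (-n))" by linarith
  then show ?thesis
  proof
    assume "n = int (nat n)" then show ?thesis using hom_of_nat[OF h, of "nat n"]
      by (metis of_int_of_nat_eq)
  next
    assume e: "n = - int (nat (-n))"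
    have "F (of_int n) = F (- of_nat (nat (-n)))" by (subst e) simp
    also have "\<dots> = - of_nat (nat (-n))" using h by (simp add: hom_uminus hom_of_nat)
    also have "\<dots> = of_int n" by (subst (2) e) simp
    finally show ?thesis .
  qed
qed

lemma hom_comp: "hom F \<Longrightarrow> hom G \<Longrightarrow> hom (F \<circ> G)"
  by (simp add: hom_def)

lemma hom_map_poly: assumes "hom F" shows "hom (map_poly F)"
proof -
  have F0: "F 0 = 0" using hom_0[OF assms] .
  have "map_poly F (a + b) = map_poly F a + map_poly F b" for a b
    by (rule poly_eqI) (simp add: coeff_map_poly F0 hom_add[OF assms])
  moreover have "map_poly F (a * b) = map_poly F a * map_poly F b" for a b
    by (rule poly_eqI) (simp add: coeff_map_poly F0 coeff_mult hom_sum[OF assms] hom_mult[OF assms])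
  moreover have "map_poly F 1 = 1" using hom_1[OF assms] by simp
  ultimately show ?thesis by (simp add: hom_def)
qed

lemma hom_pcompose: "hom (\<lambda>p. pcompose p q)"
  by (simp add: hom_def pcompose_add pcompose_mult pcompose_1)

lemma map_poly_pcompose_hom: assumes "hom F"
  shows "map_poly F (pcompose p q) = pcompose (map_poly F p) (map_poly F q)"
proof (induct p)
  case 0 then show ?case by simp
next
  case (pCons a p)
  have F0: "F 0 = 0" using hom_0[OF assms] .
  have c: "map_poly F [:a:] = [:F a:]" using map_poly_pCons[of F a 0] F0 by simp
  show ?case
    using pCons by (simp add: pcompose_pCons map_poly_pCons F0
        hom_add[OF hom_map_poly[OF assms]] hom_mult[OF hom_map_poly[OF assms]] c)
qed

definition Lin :: "int \<Rightarrow> 'a::comm_ring_1 poly" where "Lin r = [:of_int r, 1:]"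

lemma map_poly_Lin: "hom F \<Longrightarrow> map_poly F (Lin r) = Lin r"
  by (simp add: Lin_def map_poly_pCons hom_0 hom_1 hom_of_int)

lemma pcompose_Lin: "pcompose (Lin a) (Lin b) = (Lin (a + b) :: 'a::comm_ring_1 poly)"
  by (simp add: Lin_def pcompose_pCons algebra_simps)

lemma pcompose_Lin0[simp]: "pcompose p (Lin 0) = p"
  by (simp add: Lin_def)

lemma degree_Lin[simp]: "degree (Lin a :: 'a::comm_ring_1 poly) = 1"
  by (simp add: Lin_def)

lemma shx_alt: "shx a p = map_poly (map_poly (\<lambda>r. pcompose r (Lin a))) p"
  by (simp add: shx_def Lin_def)
lemma shy_alt: "shy a p = map_poly (\<lambda>r. pcompose r (Lin a)) p"
  by (simp add: shy_def Lin_def)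
lemma shz_alt: "shz a p = pcompose p (Lin a)"
  by (simp add: shz_def Lin_def)

lemma hom_shx: "hom (shx a)"
  unfolding shx_alt[abs_def] by (intro hom_map_poly hom_pcompose)
lemma hom_shy: "hom (shy a)"
  unfolding shy_alt[abs_def] by (intro hom_map_poly hom_pcompose)
lemma hom_shz: "hom (shz a)"
  unfolding shz_alt[abs_def] by (rule hom_pcompose)

lemma fun_pc: "(\<lambda>r. pcompose r (Lin a)) \<circ> (\<lambda>r. pcompose r (Lin b)) = (\<lambda>r. pcompose r (Lin (a+b)))"
  by (auto simp: fun_eq_iff pcompose_assoc[symmetric] pcompose_Lin add.commute)

lemma shz_shz[simp]: "shz a (shz b p) = shz (a + b) p"
  by (simp add: shz_alt pcompose_assoc[symmetric] pcompose_Lin add.commute)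
lemma map_poly_comp_fun: "f 0 = 0 \<Longrightarrow> g 0 = 0 \<Longrightarrow> map_poly f \<circ> map_poly g = map_poly (f \<circ> g)"
  by (auto simp: fun_eq_iff map_poly_map_poly)

lemma map_poly_id_fun[simp]: "map_poly (\<lambda>x. x) = (\<lambda>x. x)"
  by auto

lemma shy_shy[simp]: "shy a (shy b p) = shy (a + b) p"
  by (simp add: shy_alt map_poly_map_poly fun_pc)
lemma shx_shx[simp]: "shx a (shx b p) = shx (a + b) p"
  by (simp add: shx_alt map_poly_map_poly map_poly_comp_fun fun_pc)

lemma shx0[simp]: "shx 0 p = p" by (simp add: shx_alt)
lemma shy0[simp]: "shy 0 p = p" by (simp add: shy_alt)
lemma shz0[simp]: "shz 0 p = p" by (simp add: shz_alt)

lemma shy_shx[simp]: "shy b (shx a p) = shx a (shy b p)"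
proof -
  have h: "hom (\<lambda>r. pcompose r (Lin a))" by (intro hom_pcompose)
  show ?thesis
    unfolding shx_alt shy_alt
    by (simp add: map_poly_map_poly o_def map_poly_pcompose_hom[OF h] map_poly_Lin[OF h])
qed

lemma shz_shx[simp]: "shz c (shx a p) = shx a (shz c p)"
proof -
  have h: "hom (map_poly (\<lambda>r. pcompose r (Lin a)))" by (intro hom_map_poly hom_pcompose)
  show ?thesis
    unfolding shx_alt shz_alt
    using map_poly_pcompose_hom[OF h, of p "Lin c"] map_poly_Lin[OF h, of c] by metis
qed

lemma shz_shy[simp]: "shz c (shy b p) = shy b (shz c p)"
proof -
  have h: "hom (\<lambda>r. pcompose r (Lin b))" by (intro hom_pcompose)
  show ?thesis
    unfolding shy_alt shz_alt
    using map_poly_pcompose_hom[OF h, of p "Lin c"] map_poly_Lin[OF h, of c] by metis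
qed



definition act :: "int \<Rightarrow> int \<Rightarrow> int \<Rightarrow> 'a::field_char_0 tpoly \<Rightarrow> 'a tpoly" where
  "act a b c X = shx a (shy b (shz c X))"

lemma act_act[simp]: "act a b c (act a' b' c' X) = act (a + a') (b + b') (c + c') X"
  by (simp add: act_def)

lemma act_000[simp]: "act 0 0 0 X = X" by (simp add: act_def)

lemma hom_act: "hom (act a b c)"
proof -
  have e: "act a b c = shx a \<circ> (shy b \<circ> shz c)" by (auto simp: act_def)
  show ?thesis unfolding e by (intro hom_comp hom_shx hom_shy hom_shz)
qed

lemma act_inv: "act (-a) (-b) (-c) (act a b c X) = X" by simp

lemma act_eq0: "act a b c X = 0 \<Longrightarrow> X = 0"
  by (metis act_inv hom_0 hom_act)

lemma act_nz: "X \<noteq> 0 \<Longrightarrow> act a b c X \<noteq> 0"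
  using act_eq0 by blast

lemma shx_act: "shx a X = act a 0 0 X" by (simp add: act_def)
lemma shy_act: "shy b X = act 0 b 0 X" by (simp add: act_def)
lemma shz_act: "shz c X = act 0 0 c X" by (simp add: act_def)

definition Inv where "Inv a b c X \<longleftrightarrow> act a b c X = X"

lemma Inv_of_eq: "act a b c X = act a' b' c' X \<Longrightarrow> Inv (a - a') (b - b') (c - c') X"
  unfolding Inv_def by (metis act_act act_inv diff_conv_add_uminus add.commute)

lemma Inv_add: "Inv a b c X \<Longrightarrow> Inv a' b' c' X \<Longrightarrow> Inv (a + a') (b + b') (c + c') X"
  unfolding Inv_def by (metis act_act)

lemma Inv_neg: "Inv a b c X \<Longrightarrow> Inv (-a) (-b) (-c) X"
  unfolding Inv_def by (metis act_inv)

lemma Inv_nat: "Inv a b c X \<Longrightarrow> Inv (int j * a) (int j * b) (int j * c) X"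
proof (induct j)
  case 0 then show ?case by (simp add: Inv_def)
next
  case (Suc j)
  then show ?case using Inv_add[of a b c X "int j * a" "int j * b" "int j * c"]
    by (simp add: algebra_simps)
qed

lemma Inv_int: "Inv a b c X \<Longrightarrow> Inv (j * a) (j * b) (j * c) X"
proof -
  assume h: "Inv a b c X"
  have "j = int (nat j) \<or> j = - int (nat (-j))" by linarith
  then show ?thesis
  proof
    assume "j = int (nat j)" then show ?thesis using Inv_nat[OF h, of "nat j"] by metis
  next
    assume e: "j = - int (nat (-j))"
    show ?thesis using Inv_neg[OF Inv_nat[OF h, of "nat (-j)"]] e by (metis mult_minus_left)
  qed
qed

lemma Inv_cong: "Inv a b c X \<Longrightarrow> a = a' \<Longrightarrow> b = b' \<Longrightarrow> c = c' \<Longrightarrow> Inv a' b' c' X"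
  by simp

lemma Inv_mult: "Inv a b c X \<Longrightarrow> Inv a b c Y \<Longrightarrow> Inv a b c (X * Y)"
  unfolding Inv_def using hom_mult[OF hom_act] by metis

lemma Inv_power: "Inv a b c X \<Longrightarrow> Inv a b c (X ^ n)"
  unfolding Inv_def using hom_power[OF hom_act] by metis

lemma shz_embxy: "shz c (embxy q) = embxy q"
  by (simp add: shz_alt embxy_def)
lemma shz_embx: "shz c (embx q) = embx q"
  by (simp add: shz_alt embx_def)
lemma shy_embx: "shy b (embx q) = embx q"
  by (simp add: shy_alt embx_def map_poly_pCons)
lemma act_embx: "act 0 b c (embx q) = embx q"
  by (simp add: act_def shz_embx shy_embx)

lemma Inv_embxy: "Inv 0 0 c (embxy q)"
  by (simp add: Inv_def act_def shz_embxy)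


lemma fshift_Fract:
  assumes h: "hom s" and inj: "\<And>X. s X = 0 \<Longrightarrow> X = 0" and b: "b \<noteq> 0"
  shows "fshift s (Fract a b) = Fract (s a) (s b)"
  unfolding fshift_def
proof (rule the_equality)
  show "\<forall>a' b'. b' \<noteq> 0 \<longrightarrow> Fract a b = Fract a' b' \<longrightarrow> Fract (s a) (s b) = Fract (s a') (s b')"
  proof (intro allI impI)
    fix a' b' assume b': "b' \<noteq> 0" and e: "Fract a b = Fract a' b'"
    then have "a * b' = a' * b" using b by (simp add: eq_fract)
    then have "s a * s b' = s a' * s b" by (metis h hom_mult)
    moreover have "s b \<noteq> 0" "s b' \<noteq> 0" using inj b b' by blast+
    ultimately show "Fract (s a) (s b) = Fract (s a') (s b')" by (simp add: eq_fract)
  qed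
next
  fix r assume "\<forall>a' b'. b' \<noteq> 0 \<longrightarrow> Fract a b = Fract a' b' \<longrightarrow> r = Fract (s a') (s b')"
  then show "r = Fract (s a) (s b)" using b by blast
qed

definition fa :: "int \<Rightarrow> int \<Rightarrow> int \<Rightarrow> 'a::field_char_0 trat \<Rightarrow> 'a trat" where
  "fa a b c = fshift (act a b c)"

lemma fa_Fract: "y \<noteq> 0 \<Longrightarrow> fa a b c (Fract x y) = Fract (act a b c x) (act a b c y)"
  unfolding fa_def by (rule fshift_Fract[OF hom_act act_eq0])

lemma fa_add: "fa a b c (g + h) = fa a b c g + fa a b c h"
proof (cases g; cases h)
  fix x y x' y' assume g: "g = Fract x y" "y \<noteq> 0" and h: "h = Fract x' y'" "y' \<noteq> 0"
  then show ?thesis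
    by (simp add: fa_Fract act_nz hom_add[OF hom_act] hom_mult[OF hom_act])
qed

lemma fa_mult: "fa a b c (g * h) = fa a b c g * fa a b c h"
proof (cases g; cases h)
  fix x y x' y' assume g: "g = Fract x y" "y \<noteq> 0" and h: "h = Fract x' y'" "y' \<noteq> 0"
  then show ?thesis
    by (simp add: fa_Fract act_nz hom_mult[OF hom_act])
qed

lemma fa_0[simp]: "fa a b c 0 = 0"
  by (simp add: Zero_fract_def fa_Fract hom_0[OF hom_act] hom_1[OF hom_act])

lemma fa_uminus: "fa a b c (- g) = - fa a b c g"
  using fa_add[of a b c g "-g"] by (metis add.inverse_unique fa_0 add.right_inverse)

lemma fa_diff: "fa a b c (g - h) = fa a b c g - fa a b c h"
  using fa_add[of a b c g "-h"] fa_uminus by simp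

lemma fa_comp[simp]: "fa a b c (fa a' b' c' g) = fa (a + a') (b + b') (c + c') g"
proof (cases g)
  fix x y assume g: "g = Fract x y" "y \<noteq> 0"
  then show ?thesis by (simp add: fa_Fract act_nz)
qed

lemma fa_000[simp]: "fa 0 0 0 g = g"
  by (cases g) (simp add: fa_Fract)

lemma sigma_x_fa: "sigma_x = fa 1 0 0"
  by (simp add: sigma_x_def fa_def act_def[abs_def])
lemma sigma_y_fa: "sigma_y = fa 0 1 0"
  by (simp add: sigma_y_def fa_def act_def[abs_def])
lemma sigma_z_fa: "sigma_z = fa 0 0 1"
  by (simp add: sigma_z_def fa_def act_def[abs_def])

lemma sigma_x_pow: "(sigma_x ^^ i) g = fa (int i) 0 0 g"
  by (induct i) (simp_all add: sigma_x_fa add.commute)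


lemma summ_add: "yz_summable g \<Longrightarrow> yz_summable h \<Longrightarrow> yz_summable (g + h)"
  unfolding yz_summable_def sigma_y_fa sigma_z_fa
proof (elim exE)
  fix u v u' v'
  assume g: "g = fa 0 1 0 u - u + fa 0 0 1 v - v" and h: "h = fa 0 1 0 u' - u' + fa 0 0 1 v' - v'"
  have "g + h = fa 0 1 0 (u + u') - (u + u') + fa 0 0 1 (v + v') - (v + v')"
    unfolding g h fa_add by (simp add: algebra_simps)
  then show "\<exists>u v. g + h = fa 0 1 0 u - u + fa 0 0 1 v - v" by blast
qed

lemma summ_neg: "yz_summable g \<Longrightarrow> yz_summable (- g)"
  unfolding yz_summable_def sigma_y_fa sigma_z_fa
proof (elim exE)
  fix u v
  assume g: "g = fa 0 1 0 u - u + fa 0 0 1 v - v"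
  have "- g = fa 0 1 0 (- u) - (- u) + fa 0 0 1 (- v) - (- v)"
    unfolding g fa_uminus by (simp add: algebra_simps)
  then show "\<exists>u v. - g = fa 0 1 0 u - u + fa 0 0 1 v - v" by blast
qed

lemma summ_0: "yz_summable 0"
  unfolding yz_summable_def by (rule exI[of _ 0], rule exI[of _ 0]) (simp add: sigma_y_fa sigma_z_fa)

lemma summ_y1: "yz_summable (fa 0 1 0 u - u)"
  unfolding yz_summable_def sigma_y_fa sigma_z_fa
  by (rule exI[of _ u], rule exI[of _ 0]) simp

lemma summ_z1: "yz_summable (fa 0 0 1 u - u)"
  unfolding yz_summable_def sigma_y_fa sigma_z_fa
  by (rule exI[of _ 0], rule exI[of _ u]) simp

lemma summ_sum: "(\<And>i. i \<in> A \<Longrightarrow> yz_summable (g i)) \<Longrightarrow> yz_summable (sum g A)"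
  by (induct A rule: infinite_finite_induct) (auto simp: summ_0 summ_add)

lemma summ_y_nat: "yz_summable (fa 0 (int p) 0 g - g)"
proof (induct p)
  case 0 then show ?case by (simp add: summ_0)
next
  case (Suc p)
  have eq: "fa 0 (int (Suc p)) 0 g - g = (fa 0 1 0 (fa 0 (int p) 0 g) - fa 0 (int p) 0 g) + (fa 0 (int p) 0 g - g)"
    by (simp add: add.commute)
  show ?case unfolding eq by (rule summ_add[OF summ_y1 Suc])
qed

lemma summ_z_nat: "yz_summable (fa 0 0 (int p) g - g)"
proof (induct p)
  case 0 then show ?case by (simp add: summ_0)
next
  case (Suc p)
  have eq: "fa 0 0 (int (Suc p)) g - g = (fa 0 0 1 (fa 0 0 (int p) g) - fa 0 0 (int p) g) + (fa 0 0 (int p) g - g)"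
    by (simp add: add.commute)
  show ?case unfolding eq by (rule summ_add[OF summ_z1 Suc])
qed

lemma summ_y: "yz_summable (fa 0 p 0 g - g)"
proof -
  have "p = int (nat p) \<or> p = - int (nat (-p))" by linarith
  then show ?thesis
  proof
    assume "p = int (nat p)" then show ?thesis using summ_y_nat[of "nat p" g] by metis
  next
    assume e: "p = - int (nat (-p))"
    let ?h = "fa 0 p 0 g"
    have "fa 0 p 0 g - g = - (fa 0 (int (nat (-p))) 0 ?h - ?h)"
      by (subst e) simp
    then show ?thesis using summ_neg[OF summ_y_nat[of "nat (-p)" ?h]] by simp
  qed
qed

lemma summ_z: "yz_summable (fa 0 0 q g - g)"
proof -
  have "q = int (nat q) \<or> q = - int (nat (-q))" by linarith
  then show ?thesis
  proof
    assume "q = int (nat q)" then show ?thesis using summ_z_nat[of "nat q" g] by metis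
  next
    assume e: "q = - int (nat (-q))"
    let ?h = "fa 0 0 q g"
    have "fa 0 0 q g - g = - (fa 0 0 (int (nat (-q))) ?h - ?h)"
      by (subst e) simp
    then show ?thesis using summ_neg[OF summ_z_nat[of "nat (-q)" ?h]] by simp
  qed
qed

lemma summ_yz: "yz_summable (fa 0 p q g - g)"
proof -
  have e: "fa 0 p q g - g = (fa 0 p 0 (fa 0 0 q g) - fa 0 0 q g) + (fa 0 0 q g - g)" by simp
  show ?thesis unfolding e by (rule summ_add[OF summ_y summ_z])
qed



lemma lin_dep:
  fixes v :: "nat \<Rightarrow> 'i \<Rightarrow> 'r::idom"
  assumes "finite I" "finite J" "card I < card J"
  shows "\<exists>a. (\<exists>j\<in>J. a j \<noteq> 0) \<and> (\<forall>i\<in>I. (\<Sum>j\<in>J. a j * v j i) = 0)"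
  using assms
proof (induct I arbitrary: J v rule: finite_induct)
  case empty
  then obtain j where "j \<in> J" by fastforce
  then show ?case by (intro exI[of _ "\<lambda>_. 1"]) auto
next
  case (insert i0 I)
  have cI: "card (insert i0 I) = Suc (card I)" using insert by simp
  show ?case
  proof (cases "\<forall>j\<in>J. v j i0 = 0")
    case True
    obtain a where a: "\<exists>j\<in>J. a j \<noteq> 0" "\<forall>i\<in>I. (\<Sum>j\<in>J. a j * v j i) = 0"
      using insert.hyps(3)[of J v] insert.prems cI by auto
    then show ?thesis using True by (intro exI[of _ a]) auto
  next
    case False
    then obtain j0 where j0: "j0 \<in> J" "v j0 i0 \<noteq> 0" by blast
    define c where "c = v j0 i0"
    define J' where "J' = J - {j0}"
    define w where "w j i = c * v j i - v j i0 * v j0 i" for j i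
    have fJ': "finite J'" using insert.prems J'_def by simp
    have cJ': "card I < card J'" using insert.prems j0 cI unfolding J'_def by (simp add: card_Diff_singleton)
    obtain a' where a': "\<exists>j\<in>J'. a' j \<noteq> 0" "\<forall>i\<in>I. (\<Sum>j\<in>J'. a' j * w j i) = 0"
      using insert.hyps(3)[OF fJ' cJ', of w] by auto
    define a where "a j = (if j = j0 then - (\<Sum>k\<in>J'. a' k * v k i0) else c * a' j)" for j
    have key: "(\<Sum>j\<in>J. a j * v j i) = (\<Sum>j\<in>J'. a' j * w j i)" for i
    proof -
      have "(\<Sum>j\<in>J. a j * v j i) = a j0 * v j0 i + (\<Sum>j\<in>J'. a j * v j i)"
        unfolding J'_def using insert.prems j0 by (simp add: sum.remove)
      also have "(\<Sum>j\<in>J'. a j * v j i) = (\<Sum>j\<in>J'. c * a' j * v j i)"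
        by (rule sum.cong) (auto simp: a_def J'_def)
      also have "a j0 * v j0 i = - (\<Sum>k\<in>J'. a' k * v k i0 * v j0 i)"
        by (simp add: a_def sum_distrib_right)
      finally show ?thesis
        by (simp add: w_def algebra_simps sum_subtractf sum_distrib_left)
    qed
    show ?thesis
    proof (intro exI[of _ a] conjI)
      obtain j where j: "j \<in> J'" "a' j \<noteq> 0" using a' by blast
      then have "a j \<noteq> 0" using j0 by (auto simp: a_def J'_def c_def)
      then show "\<exists>j\<in>J. a j \<noteq> 0" using j by (auto simp: J'_def)
      show "\<forall>i\<in>insert i0 I. (\<Sum>j\<in>J. a j * v j i) = 0"
        using a'(2) by (auto simp: key w_def c_def)
    qed
  qed
qed

definition Ybound :: "nat \<Rightarrow> 'a::field_char_0 tpoly \<Rightarrow> bool" where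
  "Ybound D X \<longleftrightarrow> (\<forall>s. degree (coeff X s) \<le> D)"

lemma degree_shx: "degree (shx a X) \<le> degree X"
  unfolding shx_alt by (rule map_poly_degree_leq)
lemma degree_shy: "degree (shy a X) \<le> degree X"
  unfolding shy_alt by (rule map_poly_degree_leq)
lemma degree_shz: "degree (shz a X) = degree X"
  unfolding shz_alt by (simp add: degree_pcompose)
lemma degree_act: "degree (act a b c X) \<le> degree X"
  unfolding act_def using degree_shx degree_shy degree_shz by (metis order_trans)

lemma Ybound_shx: "Ybound D X \<Longrightarrow> Ybound D (shx a X)"
  unfolding Ybound_def shx_alt
  by (metis coeff_map_poly map_poly_0 map_poly_degree_leq order_trans)

lemma Ybound_shy: "Ybound D X \<Longrightarrow> Ybound D (shy a X)"
  unfolding Ybound_def shy_alt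
  by (simp add: coeff_map_poly degree_pcompose)

lemma Ybound_add: "Ybound D X \<Longrightarrow> Ybound D Y \<Longrightarrow> Ybound D (X + Y)"
  unfolding Ybound_def by (metis coeff_add degree_add_le)

lemma Ybound_Lin: "Ybound D Y \<Longrightarrow> Ybound D (Lin c * Y)"
proof -
  assume Y: "Ybound D Y"
  have e: "Lin c * Y = smult (of_int c) Y + pCons 0 Y" by (simp add: Lin_def)
  have 1: "Ybound D (smult (of_int c) Y)"
    unfolding Ybound_def coeff_smult
  proof
    fix s
    have "degree (of_int c * coeff Y s) \<le> degree (of_int c :: 'a poly poly) + degree (coeff Y s)"
      by (rule degree_mult_le)
    then show "degree (of_int c * coeff Y s) \<le> D" using Y unfolding Ybound_def
      by (metis add_0 degree_of_int order_trans)
  qed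
  have 2: "Ybound D (pCons 0 Y)"
    unfolding Ybound_def using Y unfolding Ybound_def by (auto simp: coeff_pCons split: nat.splits)
  show ?thesis unfolding e by (rule Ybound_add[OF 1 2])
qed

lemma Ybound_shz: "Ybound D X \<Longrightarrow> Ybound D (shz c X)"
  unfolding shz_alt
proof (induct X)
  case 0 then show ?case by (simp add: Ybound_def)
next
  case (pCons a p)
  have pa: "degree a \<le> D" using pCons.prems unfolding Ybound_def by (metis coeff_pCons_0)
  have pp: "Ybound D p" using pCons.prems unfolding Ybound_def by (metis coeff_pCons_Suc)
  have c: "Ybound D [:a:]" using pa unfolding Ybound_def by (auto simp: coeff_pCons split: nat.splits)
  show ?case unfolding pcompose_pCons by (rule Ybound_add[OF c Ybound_Lin[OF pCons.hyps(2)[OF pp]]])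
qed

lemma Ybound_act: "Ybound D X \<Longrightarrow> Ybound D (act a b c X)"
  unfolding act_def by (intro Ybound_shx Ybound_shy Ybound_shz)



lemma sum_Fract: "(D::'a::idom) \<noteq> 0 \<Longrightarrow> (\<Sum>i\<in>A. Fract (X i) D) = Fract (\<Sum>i\<in>A. X i) D"
proof (induct A rule: infinite_finite_induct)
  case (infinite A) then show ?case by (simp add: Zero_fract_def eq_fract)
next
  case empty then show ?case by (simp add: Zero_fract_def eq_fract)
next
  case (insert x F)
  then show ?case by (simp add: eq_fract algebra_simps)
qed

lemma coeff_embx_mult: "coeff (coeff (embx a * X) s) t = a * coeff (coeff X s) t"
  by (simp add: embx_def)

lemma embx_eq0: "embx a = 0 \<longleftrightarrow> a = 0" by (simp add: embx_def)
lemma embx_1: "embx 1 = 1" by (simp add: embx_def one_pCons)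

lemma fa_l: "fa 0 p q (Fract (embx a) 1) = Fract (embx a) 1"
  by (simp add: fa_Fract act_embx hom_1[OF hom_act])

lemma core:
  fixes b C d :: "'a::field_char_0 tpoly"
  assumes M: "M > (0::nat)" and IC: "Inv (int M) P Q C" and Id: "Inv (int M) P Q d"
    and Dnz: "C * d ^ lam \<noteq> 0"
  shows "has_telescoper (Fract b (C * d ^ lam))"
proof -
  define D where "D = C * d ^ lam"
  define f where "f = Fract b D"
  have DI: "Inv (int M) P Q D" unfolding D_def by (intro Inv_mult Inv_power IC Id)
  have D0: "D \<noteq> 0" using Dnz D_def by simp
  have F0: "Fract 0 D = 0" by (metis Zero_fract_def eq_fract(3))
  define B where "B j = act (int j * int M) (int j * P) (int j * Q) b" for j :: nat
  have sig: "(sigma_x ^^ (j * M)) f = fa 0 (- (int j * P)) (- (int j * Q)) (Fract (B j) D)" for j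
  proof -
    have IDj: "act (int j * int M) (int j * P) (int j * Q) D = D" using Inv_nat[OF DI, of j] Inv_def by metis
    have "(sigma_x ^^ (j * M)) f = Fract (act (int j * int M) 0 0 b) (act (int j * int M) 0 0 D)"
      by (simp add: sigma_x_pow f_def fa_Fract D0)
    also have "act (int j * int M) 0 0 D = act 0 (- (int j * P)) (- (int j * Q)) D"
      by (subst (2) IDj[symmetric]) simp
    also have "act (int j * int M) 0 0 b = act 0 (- (int j * P)) (- (int j * Q)) (B j)"
      by (simp add: B_def)
    finally show ?thesis by (simp add: fa_Fract D0)
  qed
  define Dz where "Dz = degree b"
  define Dy where "Dy = (\<Sum>s\<le>degree b. degree (coeff b s))"
  have Yb: "Ybound Dy b" unfolding Ybound_def
  proof
    fix s show "degree (coeff b s) \<le> Dy"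
    proof (cases "s \<le> degree b")
      case True then show ?thesis unfolding Dy_def
        by (intro member_le_sum[of s "{..degree b}" "\<lambda>s. degree (coeff b s)"]) auto
    next
      case False then show ?thesis by (simp add: coeff_eq_0)
    qed
  qed
  have YB: "Ybound Dy (B j)" for j unfolding B_def by (rule Ybound_act[OF Yb])
  have dB: "degree (B j) \<le> Dz" for j unfolding B_def Dz_def by (rule degree_act)
  define I where "I = {..Dz} \<times> {..Dy}"
  define K where "K = card I"
  define N where "N = K * M"
  define J where "J = (\<lambda>j. j * M) ` {..K}"
  have cJ: "card J = Suc K"
    unfolding J_def using M by (subst card_image) (auto simp: inj_on_def)
  have JN: "J \<subseteq> {..N}" unfolding J_def N_def by auto
  define v where "v i st = coeff (coeff (B (i div M)) (fst st)) (snd st)" for i st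
  obtain A where A: "\<exists>j\<in>J. A j \<noteq> 0" "\<forall>st\<in>I. (\<Sum>i\<in>J. A i * v i st) = 0"
    using lin_dep[of I J v] cJ unfolding K_def I_def J_def by auto
  define A' where "A' i = (if i \<in> J then A i else 0)" for i
  define l where "l i = Fract (embx (A' i)) 1" for i
  define X where "X i = embx (A' i) * B (i div M)" for i
  have Z: "(\<Sum>i\<le>N. X i) = 0"
  proof (rule poly_eqI, rule poly_eqI)
    fix s t
    have "coeff (coeff (\<Sum>i\<le>N. X i) s) t = (\<Sum>i\<le>N. A' i * v i (s, t))"
      by (simp add: coeff_sum X_def coeff_embx_mult v_def)
    also have "\<dots> = (\<Sum>i\<in>J. A i * v i (s, t))"
      by (rule sum.mono_neutral_cong_right) (use JN in \<open>auto simp: A'_def\<close>)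
    also have "\<dots> = 0"
    proof (cases "s \<le> Dz \<and> t \<le> Dy")
      case True then show ?thesis using A(2) unfolding I_def by auto
    next
      case False
      have "v i (s, t) = 0" for i
      proof (cases "s \<le> Dz")
        case True
        then have "t > Dy" using False by auto
        then have "t > degree (coeff (B (i div M)) s)" using YB unfolding Ybound_def
          by (meson le_less_trans)
        then show ?thesis by (simp add: v_def coeff_eq_0)
      next
        case False
        then have "s > degree (B (i div M))" using dB by (meson le_less_trans not_le)
        then show ?thesis by (simp add: v_def coeff_eq_0)
      qed
      then show ?thesis by simp
    qed
    finally show "coeff (coeff (\<Sum>i\<le>N. X i) s) t = coeff (coeff 0 s) t" by simp
  qed
  have each: "yz_summable (l i * (sigma_x ^^ i) f - Fract (X i) D)" if "i \<le> N" for i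
  proof (cases "i \<in> J")
    case True
    then obtain j where ij: "i = j * M" unfolding J_def by auto
    then have jd: "i div M = j" using M by simp
    have "l i * (sigma_x ^^ i) f = fa 0 (- (int j * P)) (- (int j * Q)) (l i * Fract (B j) D)"
      unfolding ij sig fa_mult l_def fa_l ..
    moreover have "l i * Fract (B j) D = Fract (X i) D"
      by (simp add: l_def X_def jd)
    ultimately show ?thesis using summ_yz by metis
  next
    case False
    show ?thesis using False by (simp add: l_def X_def A'_def embx_def Zero_fract_def[symmetric] summ_0 F0)
  qed
  have "yz_summable (\<Sum>i\<le>N. l i * (sigma_x ^^ i) f - Fract (X i) D)"
    by (rule summ_sum) (use each in auto)
  then have S: "yz_summable (\<Sum>i\<le>N. l i * (sigma_x ^^ i) f)"
    by (simp add: sum_subtractf sum_Fract[OF D0] Z F0)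
  have K1: "\<forall>i\<le>N. l i \<in> Kx"
  proof (intro allI impI)
    fix i
    have "l i = Fract (embx (A' i)) (embx 1) \<and> (1::'a poly) \<noteq> 0" by (simp add: l_def embx_1)
    then show "l i \<in> Kx" unfolding Kx_def by blast
  qed
  obtain j where j: "j \<in> J" "A j \<noteq> 0" using A(1) by blast
  have "l j \<noteq> 0" using j by (simp add: l_def A'_def Zero_fract_def eq_fract embx_eq0)
  then have K2: "\<exists>i\<le>N. l i \<noteq> 0" using j JN by blast
  show ?thesis unfolding has_telescoper_def using K1 K2 S unfolding f_def D_def by blast
qed



theorem lemma6p2:
  fixes b d :: "'a::field_char_0 tpoly" and c :: "'a poly poly"
    and f :: "'a trat" and lam m :: nat and n k :: int
  assumes lam_pos: "lam > 0"
    and c_nz: "c \<noteq> 0"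
    and f_def: "f = Fract b (embxy c * d ^ lam)"
    and d_irr: "irreducible d"
    and prim: "prim_yz b" "prim_yz (embxy c)" "prim_yz d"
    and deg: "degree b < degree d"
    and m_pos: "m > 0"
    and m_eq: "shx (int m) d = shy n (shz k d)"
    and m_min: "\<forall>m'::nat. 0 < m' \<and> m' < m \<longrightarrow>
                  \<not> (\<exists>n' k'::int. shx (int m') d = shy n' (shz k' d))"
    and cases: "(\<exists>n1 n2 k1 k2 :: int. n1 > 0 \<and> n2 > 0 \<and>
                    shy n1 d = shz k1 d \<and> shx n2 (embxy c) = shy k2 (embxy c))
              \<or> (\<exists>t::nat. t > 0 \<and> shx (int t * int m) (embxy c) = shy (int t * n) (embxy c))"
  shows "has_telescoper f"
proof -
  define C where "C = embxy c"
  have Dnz: "C * d ^ lam \<noteq> 0"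
  proof -
    have "d \<noteq> 0" using d_irr by (metis not_irreducible_zero)
    then show ?thesis using c_nz by (simp add: C_def embxy_def)
  qed
  have Im: "Inv (int m) (- n) (- k) d"
    using Inv_of_eq[of "int m" 0 0 d 0 n k] m_eq by (simp add: act_def)
  have ICz: "Inv 0 0 r C" for r unfolding C_def by (rule Inv_embxy)
  have "\<exists>M P Q. M > (0::nat) \<and> Inv (int M) P Q C \<and> Inv (int M) P Q d"
    using cases
  proof
    assume "\<exists>n1 n2 k1 k2 :: int. n1 > 0 \<and> n2 > 0 \<and>
                    shy n1 d = shz k1 d \<and> shx n2 (embxy c) = shy k2 (embxy c)"
    then obtain n1 n2 k1 k2 :: int where pos: "n1 > 0" "n2 > 0"
      and e1: "shy n1 d = shz k1 d" and e2: "shx n2 C = shy k2 C" unfolding C_def by blast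
    have I1: "Inv 0 n1 (- k1) d"
      using Inv_of_eq[of 0 n1 0 d 0 0 k1] e1 by (simp add: act_def)
    have I2: "Inv n2 (- k2) 0 C"
      using Inv_of_eq[of n2 0 0 C 0 k2 0] e2 by (simp add: act_def)
    define Mi where "Mi = int m * n2 * n1"
    define j where "j = n * n2 - k2 * int m"
    define Q where "Q = - k * n2 * n1 - j * k1"
    have Mpos: "Mi > 0" unfolding Mi_def using pos m_pos by simp
    have d1: "Inv (n2 * n1 * int m) (n2 * n1 * - n) (n2 * n1 * - k) d" by (rule Inv_int[OF Im])
    have d2: "Inv (j * 0) (j * n1) (j * - k1) d" by (rule Inv_int[OF I1])
    have dI: "Inv Mi (- k2 * int m * n1) Q d"
      by (rule Inv_cong[OF Inv_add[OF d1 d2]]) (simp_all add: Mi_def Q_def j_def algebra_simps)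
    have c1: "Inv (int m * n1 * n2) (int m * n1 * - k2) (int m * n1 * 0) C" by (rule Inv_int[OF I2])
    have cI: "Inv Mi (- k2 * int m * n1) Q C"
      by (rule Inv_cong[OF Inv_add[OF c1 ICz[of Q]]]) (simp_all add: Mi_def algebra_simps)
    show ?thesis
      using Mpos dI cI by (intro exI[of _ "nat Mi"] exI[of _ "- k2 * int m * n1"] exI[of _ Q]) simp
  next
    assume "\<exists>t::nat. t > 0 \<and> shx (int t * int m) (embxy c) = shy (int t * n) (embxy c)"
    then obtain t :: nat where t: "t > 0" and e: "shx (int t * int m) C = shy (int t * n) C"
      unfolding C_def by blast
    have c1: "Inv (int t * int m) (- (int t * n)) 0 C"
      using Inv_of_eq[of "int t * int m" 0 0 C 0 "int t * n" 0] e by (simp add: act_def)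
    have cI: "Inv (int (t * m)) (int t * - n) (int t * - k) C"
      by (rule Inv_cong[OF Inv_add[OF c1 ICz[of "int t * - k"]]]) simp_all
    have dI: "Inv (int (t * m)) (int t * - n) (int t * - k) d"
      using Inv_nat[OF Im, of t] by simp
    show ?thesis using t m_pos cI dI by (intro exI[of _ "t * m"] exI[of _ "int t * - n"] exI[of _ "int t * - k"]) simp
  qed
  then obtain M P Q where "M > (0::nat)" "Inv (int M) P Q C" "Inv (int M) P Q d" by blast
  from core[OF this Dnz, of b] show ?thesis unfolding f_def C_def .
qed

end
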